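(* For every integer $n\geq 1$ there is a bijection $\phi:\mathfrak{S}_n\to\mathfrak{S}_n$ such that for every $\sigma\in\mathfrak{S}_n$, writing $\tau=\phi(\sigma)$, we have $$\overline{\mathrm{Fix}}(\sigma)=\mathrm{Suc}(\tau),\qquad \overline{\mathrm{Drop}}(\sigma)=\mathrm{najSuc}(\tau),\qquad \overline{\mathrm{Exc}}(\sigma)=\mathrm{Pred}(\tau).$$
   Context: $\mathfrak{S}_n$ denotes the set of permutations of $[n]=\{1,\dots,n\}$, written in one-line notation $\sigma=\sigma_1\sigma_2\cdots\sigma_n$. For $\sigma\in\mathfrak{S}_n$ define: - $\mathrm{Suc}(\sigma)=\{1\le i\le n-1 : \sigma_i+1=\sigma_{i+1}\}$ (successions); - $\overline{\mathrm{Fix}}(\sigma)=\{1\le i\le n-1 : \sigma_i=i\}$ (fixed points other than $n$); - $\mathrm{najSuc}(\sigma)=\{1\le i\le n-2 : \text{there exists } j \text{ with } i+2\le j\le n \text{ and } \sigma_j=\sigma_i+1\}$ (non-adjacent successions); - $\mathrm{Pred}(\sigma)=\{2\le i\le n : \text{there exists } j \text{ with } 1\le j<i \text{ and } \sigma_j=\sigma_i+1\}$ (predecessors); - $\overline{\mathrm{Drop}}(\sigma)=\{\sigma_i : 1\le i\le n-1,\ \sigma_i<i\}$ (the set of values, not positions, of drops at positions other than $n$); - $\overline{\mathrm{Exc}}(\sigma)=\{\sigma_i : 1\le i\le n-1,\ \sigma_i>i\}$ (the set of values, not positions, of excedances at positions other than $n$). Example: for $\tau=4\,1\,2\,6\,7\,5\,3$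 one has $\mathrm{Suc}(\tau)=\{2,4\}$, $\mathrm{najSuc}(\tau)=\{1,3\}$, $\mathrm{Pred}(\tau)=\{6,7\}$. *)

theory Defs
  imports "HOL-Combinatorics.Permutations"
begin

definition perms :: "nat \<Rightarrow> (nat \<Rightarrow> nat) set" where
  "perms n = {\<sigma>. \<sigma> permutes {1..n}}"

definition Suc_set :: "nat \<Rightarrow> (nat \<Rightarrow> nat) \<Rightarrow> nat set" where
  "Suc_set n \<sigma> = {i. 1 \<le> i \<and> i \<le> n - 1 \<and> \<sigma> i + 1 = \<sigma> (i + 1)}"

definition FixBar :: "nat \<Rightarrow> (nat \<Rightarrow> nat) \<Rightarrow> nat set" where
  "FixBar n \<sigma> = {i. 1 \<le> i \<and> i \<le> n - 1 \<and> \<sigma> i = i}"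

definition najSuc :: "nat \<Rightarrow> (nat \<Rightarrow> nat) \<Rightarrow> nat set" where
  "najSuc n \<sigma> = {i. 1 \<le> i \<and> i + 2 \<le> n \<and> (\<exists>j. i + 2 \<le> j \<and> j \<le> n \<and> \<sigma> j = \<sigma> i + 1)}"

definition Pred :: "nat \<Rightarrow> (nat \<Rightarrow> nat) \<Rightarrow> nat set" where
  "Pred n \<sigma> = {i. 2 \<le> i \<and> i \<le> n \<and> (\<exists>j. 1 \<le> j \<and> j < i \<and> \<sigma> j = \<sigma> i + 1)}"

definition DropBar :: "nat \<Rightarrow> (nat \<Rightarrow> nat) \<Rightarrow> nat set" where
  "DropBar n \<sigma> = {\<sigma> i | i. 1 \<le> i \<and> i \<le> n - 1 \<and> \<sigma> i < i}"

definition ExcBar :: "nat \<Rightarrow> (nat \<Rightarrow> nat) \<Rightarrow> nat set" where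
  "ExcBar n \<sigma> = {\<sigma> i | i. 1 \<le> i \<and> i \<le> n - 1 \<and> \<sigma> i > i}"

end

theory Submission
  imports Defs
begin

definition mn :: "(nat \<Rightarrow> nat) \<Rightarrow> nat \<Rightarrow> nat" where
  "mn w k = Min (w ` {1..k})"

definition GG :: "nat \<Rightarrow> (nat \<Rightarrow> nat) \<Rightarrow> nat \<Rightarrow> nat" where
  "GG n w k = (if k < n \<and> mn w k < w (Suc k) then w (Suc k) else mn w k)"

definition PP :: "nat \<Rightarrow> (nat \<Rightarrow> nat) \<Rightarrow> nat \<Rightarrow> nat" where
  "PP n w k = (if k \<in> {1..n} then (if k = n then n else GG n w k - 1) else k)"

inductive_set orb :: "(nat \<Rightarrow> nat) \<Rightarrow> nat \<Rightarrow> nat set" for g x where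
  base: "g x \<in> orb g x"
| step: "y \<in> orb g x \<Longrightarrow> g y \<in> orb g x"

lemma orb_sub: "y \<in> orb g (g x) \<Longrightarrow> y \<in> orb g x"
  by (induction rule: orb.induct) (auto intro: orb.intros)

lemma mn_le: "1 \<le> i \<Longrightarrow> i \<le> k \<Longrightarrow> mn w k \<le> w i"
  unfolding mn_def by (rule Min_le) auto

lemma mn_in: "1 \<le> k \<Longrightarrow> \<exists>i. 1 \<le> i \<and> i \<le> k \<and> mn w k = w i"
proof -
  assume "1 \<le> k"
  then have "mn w k \<in> w ` {1..k}" unfolding mn_def by (intro Min_in) auto
  then show ?thesis by auto
qed

lemma mn_Suc: "1 \<le> k \<Longrightarrow> mn w (Suc k) = min (mn w k) (w (Suc k))"
proof -
  assume k: "1 \<le> k"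
  have "{1..Suc k} = insert (Suc k) {1..k}" by auto
  then have "mn w (Suc k) = Min (insert (w (Suc k)) (w ` {1..k}))" unfolding mn_def by simp
  also have "\<dots> = min (w (Suc k)) (Min (w ` {1..k}))" using k by (intro Min_insert) auto
  finally show ?thesis unfolding mn_def by simp
qed

lemma mn_mono: "1 \<le> j \<Longrightarrow> j \<le> k \<Longrightarrow> mn w k \<le> mn w j"
  unfolding mn_def by (rule Min_antimono) auto

lemma mn_1: "mn w 1 = w 1" unfolding mn_def by simp

locale wp =
  fixes n :: nat and w :: "nat \<Rightarrow> nat"
  assumes wperm: "w permutes {1..n}"
begin

lemma w_in: "k \<in> {1..n} \<Longrightarrow> w k \<in> {1..n}"
  using permutes_in_image[OF wperm] by simp

lemma w_inj: "w i = w j \<Longrightarrow> i = j"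
  using permutes_inj[OF wperm] by (auto dest: injD)

lemma mn_n: "1 \<le> n \<Longrightarrow> mn w n = 1"
proof -
  assume "1 \<le> n"
  have "w ` {1..n} = {1..n}" using permutes_image[OF wperm] .
  then show ?thesis unfolding mn_def using \<open>1 \<le> n\<close> by (simp add: Min_eq_iff)
qed

lemma mn_ge1: "1 \<le> k \<Longrightarrow> k \<le> n \<Longrightarrow> 1 \<le> mn w k"
  using mn_in[of k w] w_in by fastforce

lemma G_n: "1 \<le> n \<Longrightarrow> GG n w n = 1"
  unfolding GG_def using mn_n by simp

lemma G_lt: assumes "1 \<le> k" "k < n" shows "2 \<le> GG n w k"
proof -
  obtain i where i: "1 \<le> i" "i \<le> k" "mn w k = w i" using mn_in assms by blast
  have "w (Suc k) \<noteq> w i" using w_inj[of "Suc k" i] i by auto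
  moreover have "1 \<le> w (Suc k)" using w_in[of "Suc k"] assms by auto
  moreover have "1 \<le> w i" using w_in[of i] i assms by auto
  ultimately show ?thesis unfolding GG_def using i assms by auto
qed

lemma G_le: assumes "1 \<le> k" "k \<le> n" shows "GG n w k \<le> n"
proof -
  obtain i where i: "1 \<le> i" "i \<le> k" "mn w k = w i" using mn_in assms by blast
  show ?thesis unfolding GG_def using i assms w_in[of i] w_in[of "Suc k"] by auto
qed

lemma G_rel: assumes "1 \<le> k" "k < n"
  shows "(GG n w k = w k + 1 \<longleftrightarrow> w (Suc k) = w k + 1)"
    "(w k + 2 \<le> GG n w k \<longleftrightarrow> w k + 2 \<le> w (Suc k))"
    "(GG n w k \<le> w k \<longleftrightarrow> w (Suc k) < w k)"
proof -
  have m: "mn w k \<le> w k" using mn_le assms by auto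
  have d: "w (Suc k) \<noteq> w k" using w_inj[of "Suc k" k] by auto
  show "(GG n w k = w k + 1 \<longleftrightarrow> w (Suc k) = w k + 1)"
    "(w k + 2 \<le> GG n w k \<longleftrightarrow> w k + 2 \<le> w (Suc k))"
    "(GG n w k \<le> w k \<longleftrightarrow> w (Suc k) < w k)"
    unfolding GG_def using m d assms by auto
qed

lemma G_block: assumes "1 \<le> k" "k \<le> n"
  shows "\<exists>j. 1 \<le> j \<and> j \<le> n \<and> GG n w k = w j \<and> mn w j = mn w k"
proof (cases "k < n \<and> mn w k < w (Suc k)")
  case True
  then show ?thesis unfolding GG_def using mn_Suc[of k w] assms
    by (intro exI[of _ "Suc k"]) auto
next
  case False
  obtain i where i: "1 \<le> i" "i \<le> k" "mn w k = w i" using mn_in assms by blast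
  have "mn w i \<le> w i" using mn_le i by auto
  moreover have "mn w k \<le> mn w i" using mn_mono[of i k w] i by auto
  ultimately show ?thesis using False i assms unfolding GG_def
    by (intro exI[of _ i]) auto
qed

lemma G_inj_aux: assumes ab: "1 \<le> a" "a < b" "b < n" "GG n w a = GG n w b" shows False
proof -
    obtain i where i: "1 \<le> i" "i \<le> a" "mn w a = w i" using mn_in[of a w] ab(1) by blast
    obtain q where q: "1 \<le> q" "q \<le> b" "mn w b = w q" using mn_in[of b w] ab(1,2) by (meson le_trans less_imp_le_nat)
    have d1: "w (Suc a) \<noteq> w i" using w_inj[of "Suc a" i] i by auto
    have ms: "mn w (Suc a) = min (mn w a) (w (Suc a))" using mn_Suc ab by auto
    have mb: "mn w b \<le> mn w (Suc a)" using mn_mono[of "Suc a" b w] ab by auto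
    show False
    proof (cases "mn w a < w (Suc a)")
      case c1: True
      show False
      proof (cases "mn w b < w (Suc b)")
        case True
        then have "w (Suc a) = w (Suc b)" using ab c1 unfolding GG_def by auto
        then show False using w_inj ab by fastforce
      next
        case False
        then have "w (Suc a) = w q" using ab c1 q unfolding GG_def by auto
        then have "q = Suc a" using w_inj by auto
        then show False using ms mb q c1 by auto
      qed
    next
      case c2: False
      show False
      proof (cases "mn w b < w (Suc b)")
        case True
        then have "w i = w (Suc b)" using ab c2 i unfolding GG_def by auto
        then show False using w_inj i ab by fastforce
      next
        case False
        then have "mn w a = mn w b" using ab c2 unfolding GG_def by auto
        then show False using ms mb c2 d1 i by auto
      qed
    qed
qed

lemma G_inj: assumes "1 \<le> k" "k < n" "1 \<le> j" "j < n" "GG n w k = GG n w j"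
  shows "k = j"
  using G_inj_aux[of k j] G_inj_aux[of j k] assms by (metis linorder_neqE_nat)


lemma orbA:
  assumes H: "\<And>k. 1 \<le> k \<Longrightarrow> k \<le> n \<Longrightarrow> g (w k) = GG n w k"
    and p: "1 \<le> p" "p \<le> n" and y: "y \<in> orb g (w p)"
  shows "\<exists>j. 1 \<le> j \<and> j \<le> n \<and> y = w j \<and> mn w j = mn w p"
  using y
proof (induction rule: orb.induct)
  case base
  then show ?case using H[OF p] G_block[OF p] by auto
next
  case (step y)
  then obtain j where j: "1 \<le> j" "j \<le> n" "y = w j" "mn w j = mn w p" by blast
  then show ?case using H[OF j(1,2)] G_block[OF j(1,2)] by auto
qed

lemma orbB:
  assumes H: "\<And>k. 1 \<le> k \<Longrightarrow> k \<le> n \<Longrightarrow> g (w k) = GG n w k"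
  shows "1 \<le> p \<Longrightarrow> p \<le> n \<Longrightarrow> mn w p \<in> orb g (w p)"
proof (induction "n - p" arbitrary: p)
  case 0
  then have "p = n" by auto
  then show ?case using H[of p] 0 orb.base[of g "w p"] unfolding GG_def by auto
next
  case (Suc d)
  show ?case
  proof (cases "p < n \<and> mn w p < w (Suc p)")
    case True
    then have e: "g (w p) = w (Suc p)" using H[of p] Suc.prems unfolding GG_def by auto
    have "mn w (Suc p) = mn w p" using mn_Suc[of p w] True Suc.prems by auto
    moreover have "mn w (Suc p) \<in> orb g (w (Suc p))" using Suc True by auto
    ultimately show ?thesis using orb_sub e by metis
  next
    case False
    then show ?thesis using H[of p] Suc.prems orb.base[of g "w p"] unfolding GG_def by auto
  qed
qed

lemma orbQ:
  assumes H: "\<And>k. 1 \<le> k \<Longrightarrow> k \<le> n \<Longrightarrow> g (w k) = GG n w k"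
    and p: "1 \<le> p" "p \<le> n"
  shows "(\<forall>y\<in>orb g (w p). w p \<le> y) \<longleftrightarrow> mn w p = w p"
proof
  assume "\<forall>y\<in>orb g (w p). w p \<le> y"
  then have "w p \<le> mn w p" using orbB[OF H p] by auto
  then show "mn w p = w p" using mn_le[of p p w] p by auto
next
  assume m: "mn w p = w p"
  show "\<forall>y\<in>orb g (w p). w p \<le> y"
  proof
    fix y assume "y \<in> orb g (w p)"
    then obtain j where j: "1 \<le> j" "j \<le> n" "y = w j" "mn w j = mn w p"
      using orbA[OF H p] by blast
    then show "w p \<le> y" using mn_le[of j j w] m by auto
  qed
qed

end

lemma core:
  assumes w: "w permutes {1..n}" and w': "w' permutes {1..n}"
    and H: "\<And>k. 1 \<le> k \<Longrightarrow> k \<le> n \<Longrightarrow> g (w k) = GG n w k"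
    and H': "\<And>k. 1 \<le> k \<Longrightarrow> k \<le> n \<Longrightarrow> g (w' k) = GG n w' k"
    and k: "1 \<le> k" "k \<le> n" and eq: "\<And>i. 1 \<le> i \<Longrightarrow> i < k \<Longrightarrow> w i = w' i"
    and lt: "w k < w' k" and lr: "mn w' k = w' k"
  shows False
proof -
  interpret W: wp n w by (unfold_locales) (rule w)
  interpret W': wp n w' by (unfold_locales) (rule w')
  define x where "x = w' k"
  define p where "p = inv w x"
  have x: "x \<in> {1..n}" using W'.w_in k x_def by auto
  have wp: "w p = x" using permutes_inverses(1)[OF w] p_def by simp
  have p: "p \<in> {1..n}" using x wp permutes_in_image[OF w, of p] by simp
  have "p \<noteq> k" using wp lt x_def by auto
  moreover have "\<not> p < k"
  proof
    assume "p < k"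
    then have "w' p = x" using eq[of p] p wp by auto
    then show False using W'.w_inj x_def \<open>p < k\<close> by auto
  qed
  ultimately have pk: "k < p" by auto
  have "mn w p \<le> w k" using mn_le[of k p w] pk k by auto
  then have m: "mn w p < x" using lt x_def by auto
  have "mn w p \<in> orb g x" using W.orbB[OF H] p wp by auto
  moreover have "\<forall>y\<in>orb g x. x \<le> y" using W'.orbQ[OF H' k] lr x_def by auto
  ultimately show False using m by auto
qed

lemma word_inj:
  assumes w: "w permutes {1..n}" and w': "w' permutes {1..n}"
    and H: "\<And>k. 1 \<le> k \<Longrightarrow> k \<le> n \<Longrightarrow> g (w k) = GG n w k"
    and H': "\<And>k. 1 \<le> k \<Longrightarrow> k \<le> n \<Longrightarrow> g (w' k) = GG n w' k"
  shows "w = w'"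
proof (rule ccontr)
  interpret W: wp n w by (unfold_locales) (rule w)
  interpret W': wp n w' by (unfold_locales) (rule w')
  assume ne: "w \<noteq> w'"
  have "\<exists>k. k \<in> {1..n} \<and> w k \<noteq> w' k"
  proof (rule ccontr)
    assume "\<not> ?thesis"
    then have "w x = w' x" for x
      using permutes_not_in[OF w, of x] permutes_not_in[OF w', of x] by (cases "x \<in> {1..n}") auto
    then show False using ne by auto
  qed
  define k where "k = (LEAST k. k \<in> {1..n} \<and> w k \<noteq> w' k)"
  have kk: "k \<in> {1..n} \<and> w k \<noteq> w' k" unfolding k_def
    by (rule LeastI_ex) fact
  have eq: "w i = w' i" if "1 \<le> i" "i < k" for i
  proof (rule ccontr)
    assume "w i \<noteq> w' i"
    then have "k \<le> i" unfolding k_def using that kk by (intro Least_le) auto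
    then show False using that by auto
  qed
  have k1: "1 \<le> k" "k \<le> n" using kk by auto
  have eq': "w' i = w i" if "1 \<le> i" "i < k" for i using eq that by auto
  show False
  proof (cases "k = 1")
    case True
    then have "mn w k = w k" "mn w' k = w' k" using mn_1 by auto
    then show False using kk core[OF w w' H H' k1 eq] core[OF w' w H' H k1 eq']
      by (metis linorder_neqE_nat)
  next
    case False
    then obtain j where j: "k = Suc j" "1 \<le> j" using k1 by (cases k) auto
    have mj: "mn w j = mn w' j" unfolding mn_def
      using eq j by (intro arg_cong[where f=Min] image_cong) auto
    obtain i where i: "1 \<le> i" "i \<le> j" "mn w j = w i" using mn_in[of j w] j by auto
    obtain i' where i': "1 \<le> i'" "i' \<le> j" "mn w' j = w' i'" using mn_in[of j w'] j by auto
    have c1: "w k \<noteq> mn w j" using i W.w_inj[of k i] j by auto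
    have c2: "w' k \<noteq> mn w j" using i' W'.w_inj[of k i'] j mj by auto
    have jn: "j < n" "j \<le> n" using j k1 by auto
    have g1: "g (w j) = GG n w j" using H[of j] j jn by auto
    have g2: "g (w j) = GG n w' j" using H'[of j] j jn eq[of j] by auto
    have ms1: "mn w k = min (mn w j) (w k)" using mn_Suc[of j w] j by auto
    have ms2: "mn w' k = min (mn w j) (w' k)" using mn_Suc[of j w'] j mj by auto
    consider "mn w j < w k" "mn w j < w' k" | "w k < mn w j" "mn w j < w' k"
      | "mn w j < w k" "w' k < mn w j" | "w k < mn w j" "w' k < mn w j"
      using c1 c2 by (meson linorder_neqE_nat)
    then show False
    proof cases
      case 1
      then show False using g1 g2 jn j kk mj unfolding GG_def by auto
    next
      case 2
      then show False using g1 g2 jn j mj unfolding GG_def by auto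
    next
      case 3
      then show False using g1 g2 jn j mj unfolding GG_def by auto
    next
      case 4
      then have "mn w k = w k" "mn w' k = w' k" using ms1 ms2 by auto
      then show False using kk core[OF w w' H H' k1 eq] core[OF w' w H' H k1 eq']
        by (metis linorder_neqE_nat)
    qed
  qed
qed


definition Psi :: "nat \<Rightarrow> (nat \<Rightarrow> nat) \<Rightarrow> (nat \<Rightarrow> nat)" where
  "Psi n w = w \<circ> inv (PP n w)"

context wp
begin

lemma P_n: "PP n w n = n" unfolding PP_def by auto

lemma P_lt: "1 \<le> k \<Longrightarrow> k < n \<Longrightarrow> PP n w k = GG n w k - 1" unfolding PP_def by auto

lemma P_perm: assumes n: "1 \<le> n" shows "PP n w permutes {1..n}"
proof (rule bij_imp_permutes)
  have img: "PP n w ` {1..n} \<subseteq> {1..n}"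
  proof
    fix y assume "y \<in> PP n w ` {1..n}"
    then obtain k where k: "k \<in> {1..n}" "y = PP n w k" by auto
    show "y \<in> {1..n}"
    proof (cases "k = n")
      case True then show ?thesis using k n P_n by auto
    next
      case False then show ?thesis using k P_lt[of k] G_lt[of k] G_le[of k] by auto
    qed
  qed
  have inj: "inj_on (PP n w) {1..n}"
  proof (rule inj_onI)
    fix k j assume k: "k \<in> {1..n}" and j: "j \<in> {1..n}" and e: "PP n w k = PP n w j"
    show "k = j"
    proof (cases "k = n"; cases "j = n")
      assume "k = n" "j = n" then show ?thesis by simp
    next
      assume "k = n" "j \<noteq> n"
      then show ?thesis using e k j P_n P_lt[of j] G_lt[of j] G_le[of j] by auto
    next
      assume "k \<noteq> n" "j = n"
      then show ?thesis using e k j P_n P_lt[of k] G_lt[of k] G_le[of k] by auto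
    next
      assume "k \<noteq> n" "j \<noteq> n"
      then have "GG n w k = GG n w j" using e k j P_lt[of k] P_lt[of j] G_lt[of k] G_lt[of j] by auto
      then show ?thesis using G_inj[of k j] k j \<open>k \<noteq> n\<close> \<open>j \<noteq> n\<close> by auto
    qed
  qed
  show "bij_betw (PP n w) {1..n} {1..n}"
    unfolding bij_betw_def using inj img endo_inj_surj[OF _ img inj] by auto
  show "\<And>x. x \<notin> {1..n} \<Longrightarrow> PP n w x = x" unfolding PP_def by auto
qed

lemma sigma_P: "1 \<le> n \<Longrightarrow> Psi n w (PP n w k) = w k"
  unfolding Psi_def using permutes_inverses(2)[OF P_perm] by simp

lemma Psi_perm: "1 \<le> n \<Longrightarrow> Psi n w permutes {1..n}"
  unfolding Psi_def using permutes_compose[OF permutes_inv[OF P_perm] wperm] by simp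

definition gg where "gg = (\<lambda>x. if inv (Psi n w) x = n then 1 else inv (Psi n w) x + 1)"

lemma gg_H: assumes n: "1 \<le> n" and k: "1 \<le> k" "k \<le> n" shows "gg (w k) = GG n w k"
proof -
  have "inv (Psi n w) (w k) = PP n w k"
    using sigma_P[OF n, of k] permutes_inverses(2)[OF Psi_perm[OF n], of "PP n w k"] by simp
  then show ?thesis unfolding gg_def
    using k P_n P_lt[of k] G_n[OF n] G_lt[of k] G_le[of k] by (cases "k = n") auto
qed

lemma rep1: assumes n: "1 \<le> n" and i: "1 \<le> i" "i \<le> n - 1"
  shows "\<exists>k. 1 \<le> k \<and> k < n \<and> i = GG n w k - 1 \<and> Psi n w i = w k"
proof -
  define k where "k = inv (PP n w) i"
  have Pk: "PP n w k = i" unfolding k_def using permutes_inverses(1)[OF P_perm[OF n]] by simp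
  have k: "k \<in> {1..n}" using Pk i permutes_in_image[OF P_perm[OF n], of k] by auto
  have "k \<noteq> n" using Pk P_n i by auto
  then show ?thesis using k Pk P_lt[of k] sigma_P[OF n, of k] by (intro exI[of _ k]) auto
qed

lemma rep2: assumes n: "1 \<le> n" and k: "1 \<le> k" "k < n"
  shows "1 \<le> GG n w k - 1 \<and> GG n w k - 1 \<le> n - 1 \<and> Psi n w (GG n w k - 1) = w k"
  using sigma_P[OF n, of k] P_lt[OF k] G_lt[OF k] G_le[of k] k by auto

end

locale tw = wp +
  fixes t :: "nat \<Rightarrow> nat"
  assumes tperm: "t permutes {1..n}" and tw: "\<And>x. t (w x) = x" and wt: "\<And>x. w (t x) = x"
begin

lemma t_in: "k \<in> {1..n} \<Longrightarrow> t k \<in> {1..n}"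
  using permutes_in_image[OF tperm] by simp

lemma Fix_eq: assumes n: "1 \<le> n"
  shows "FixBar n (Psi n w) = w ` {k. 1 \<le> k \<and> k < n \<and> w (Suc k) = w k + 1}"
proof
  show "FixBar n (Psi n w) \<subseteq> w ` {k. 1 \<le> k \<and> k < n \<and> w (Suc k) = w k + 1}"
  proof
    fix i assume "i \<in> FixBar n (Psi n w)"
    then have i: "1 \<le> i" "i \<le> n - 1" "Psi n w i = i" unfolding FixBar_def by auto
    obtain k where k: "1 \<le> k" "k < n" "i = GG n w k - 1" "Psi n w i = w k" using rep1[OF n i(1,2)] by auto
    then have "GG n w k = w k + 1" using i G_lt[of k] by auto
    then show "i \<in> w ` {k. 1 \<le> k \<and> k < n \<and> w (Suc k) = w k + 1}"
      using G_rel[of k] k i by auto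
  qed
next
  show "w ` {k. 1 \<le> k \<and> k < n \<and> w (Suc k) = w k + 1} \<subseteq> FixBar n (Psi n w)"
  proof
    fix i assume "i \<in> w ` {k. 1 \<le> k \<and> k < n \<and> w (Suc k) = w k + 1}"
    then obtain k where k: "1 \<le> k" "k < n" "w (Suc k) = w k + 1" "i = w k" by auto
    then have "GG n w k = w k + 1" using G_rel[of k] by auto
    then show "i \<in> FixBar n (Psi n w)" using rep2[OF n k(1,2)] k unfolding FixBar_def by auto
  qed
qed

lemma Suc_eq: "Suc_set n t = w ` {k. 1 \<le> k \<and> k < n \<and> w (Suc k) = w k + 1}"
proof
  show "Suc_set n t \<subseteq> w ` {k. 1 \<le> k \<and> k < n \<and> w (Suc k) = w k + 1}"
  proof
    fix i assume "i \<in> Suc_set n t"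
    then have i: "1 \<le> i" "i \<le> n - 1" "t i + 1 = t (i + 1)" unfolding Suc_set_def by auto
    have k: "t i \<in> {1..n}" "t (i+1) \<in> {1..n}" using t_in i by auto
    have "w (Suc (t i)) = i + 1" using i(3) wt[of "i+1"] by simp
    then show "i \<in> w ` {k. 1 \<le> k \<and> k < n \<and> w (Suc k) = w k + 1}"
      using k i wt[of i] by (intro image_eqI[of _ _ "t i"]) auto
  qed
next
  show "w ` {k. 1 \<le> k \<and> k < n \<and> w (Suc k) = w k + 1} \<subseteq> Suc_set n t"
  proof
    fix i assume "i \<in> w ` {k. 1 \<le> k \<and> k < n \<and> w (Suc k) = w k + 1}"
    then obtain k where k: "1 \<le> k" "k < n" "w (Suc k) = w k + 1" "i = w k" by auto
    have "w (Suc k) \<in> {1..n}" "w k \<in> {1..n}" using w_in[of "Suc k"] w_in[of k] k by auto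
    then show "i \<in> Suc_set n t" unfolding Suc_set_def using k tw[of k] tw[of "Suc k"] by auto
  qed
qed

lemma Drop_eq: assumes n: "1 \<le> n"
  shows "DropBar n (Psi n w) = w ` {k. 1 \<le> k \<and> k < n \<and> w k + 2 \<le> w (Suc k)}"
proof
  show "DropBar n (Psi n w) \<subseteq> w ` {k. 1 \<le> k \<and> k < n \<and> w k + 2 \<le> w (Suc k)}"
  proof
    fix x assume "x \<in> DropBar n (Psi n w)"
    then obtain i where i: "1 \<le> i" "i \<le> n - 1" "Psi n w i < i" "x = Psi n w i" unfolding DropBar_def by auto
    obtain k where k: "1 \<le> k" "k < n" "i = GG n w k - 1" "Psi n w i = w k" using rep1[OF n i(1,2)] by auto
    then have "w k + 2 \<le> GG n w k" using i G_lt[of k] by auto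
    then show "x \<in> w ` {k. 1 \<le> k \<and> k < n \<and> w k + 2 \<le> w (Suc k)}"
      using G_rel[of k] k i by auto
  qed
next
  show "w ` {k. 1 \<le> k \<and> k < n \<and> w k + 2 \<le> w (Suc k)} \<subseteq> DropBar n (Psi n w)"
  proof
    fix x assume "x \<in> w ` {k. 1 \<le> k \<and> k < n \<and> w k + 2 \<le> w (Suc k)}"
    then obtain k where k: "1 \<le> k" "k < n" "w k + 2 \<le> w (Suc k)" "x = w k" by auto
    then have "w k + 2 \<le> GG n w k" using G_rel[of k] by auto
    then show "x \<in> DropBar n (Psi n w)" using rep2[OF n k(1,2)] k unfolding DropBar_def
      by (intro CollectI exI[of _ "GG n w k - 1"]) auto
  qed
qed

lemma najSuc_eq: "najSuc n t = w ` {k. 1 \<le> k \<and> k < n \<and> w k + 2 \<le> w (Suc k)}"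
proof
  show "najSuc n t \<subseteq> w ` {k. 1 \<le> k \<and> k < n \<and> w k + 2 \<le> w (Suc k)}"
  proof
    fix i assume "i \<in> najSuc n t"
    then obtain j where i: "1 \<le> i" "i + 2 \<le> n" "i + 2 \<le> j" "j \<le> n" "t j = t i + 1"
      unfolding najSuc_def by auto
    have k: "t i \<in> {1..n}" "t j \<in> {1..n}" using t_in[of i] t_in[of j] i by auto
    have "w (Suc (t i)) = j" using i(5) wt[of j] by simp
    then show "i \<in> w ` {k. 1 \<le> k \<and> k < n \<and> w k + 2 \<le> w (Suc k)}"
      using k i wt[of i] by (intro image_eqI[of _ _ "t i"]) auto
  qed
next
  show "w ` {k. 1 \<le> k \<and> k < n \<and> w k + 2 \<le> w (Suc k)} \<subseteq> najSuc n t"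
  proof
    fix i assume "i \<in> w ` {k. 1 \<le> k \<and> k < n \<and> w k + 2 \<le> w (Suc k)}"
    then obtain k where k: "1 \<le> k" "k < n" "w k + 2 \<le> w (Suc k)" "i = w k" by auto
    have "w (Suc k) \<in> {1..n}" "w k \<in> {1..n}" using w_in[of "Suc k"] w_in[of k] k by auto
    then show "i \<in> najSuc n t" unfolding najSuc_def using k tw[of k] tw[of "Suc k"]
      by (intro CollectI conjI exI[of _ "w (Suc k)"]) auto
  qed
qed

lemma Exc_eq: assumes n: "1 \<le> n"
  shows "ExcBar n (Psi n w) = w ` {k. 1 \<le> k \<and> k < n \<and> w (Suc k) < w k}"
proof
  show "ExcBar n (Psi n w) \<subseteq> w ` {k. 1 \<le> k \<and> k < n \<and> w (Suc k) < w k}"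
  proof
    fix x assume "x \<in> ExcBar n (Psi n w)"
    then obtain i where i: "1 \<le> i" "i \<le> n - 1" "Psi n w i > i" "x = Psi n w i" unfolding ExcBar_def by auto
    obtain k where k: "1 \<le> k" "k < n" "i = GG n w k - 1" "Psi n w i = w k" using rep1[OF n i(1,2)] by auto
    then have "GG n w k \<le> w k" using i G_lt[of k] by auto
    then show "x \<in> w ` {k. 1 \<le> k \<and> k < n \<and> w (Suc k) < w k}"
      using G_rel[of k] k i by auto
  qed
next
  show "w ` {k. 1 \<le> k \<and> k < n \<and> w (Suc k) < w k} \<subseteq> ExcBar n (Psi n w)"
  proof
    fix x assume "x \<in> w ` {k. 1 \<le> k \<and> k < n \<and> w (Suc k) < w k}"
    then obtain k where k: "1 \<le> k" "k < n" "w (Suc k) < w k" "x = w k" by auto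
    then have "GG n w k \<le> w k" using G_rel[of k] by auto
    then have "GG n w k - 1 < w k" using G_lt[of k] k by auto
    then show "x \<in> ExcBar n (Psi n w)" using rep2[OF n k(1,2)] k unfolding ExcBar_def
      by (intro CollectI exI[of _ "GG n w k - 1"]) auto
  qed
qed

lemma Pred_eq: "Pred n t = w ` {k. 1 \<le> k \<and> k < n \<and> w (Suc k) < w k}"
proof
  show "Pred n t \<subseteq> w ` {k. 1 \<le> k \<and> k < n \<and> w (Suc k) < w k}"
  proof
    fix i assume "i \<in> Pred n t"
    then obtain j where i: "2 \<le> i" "i \<le> n" "1 \<le> j" "j < i" "t j = t i + 1"
      unfolding Pred_def by auto
    have k: "t i \<in> {1..n}" "t j \<in> {1..n}" using t_in[of i] t_in[of j] i by auto
    have "w (Suc (t i)) = j" using i(5) wt[of j] by simp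
    then show "i \<in> w ` {k. 1 \<le> k \<and> k < n \<and> w (Suc k) < w k}"
      using k i wt[of i] by (intro image_eqI[of _ _ "t i"]) auto
  qed
next
  show "w ` {k. 1 \<le> k \<and> k < n \<and> w (Suc k) < w k} \<subseteq> Pred n t"
  proof
    fix i assume "i \<in> w ` {k. 1 \<le> k \<and> k < n \<and> w (Suc k) < w k}"
    then obtain k where k: "1 \<le> k" "k < n" "w (Suc k) < w k" "i = w k" by auto
    have "w (Suc k) \<in> {1..n}" "w k \<in> {1..n}" using w_in[of "Suc k"] w_in[of k] k by auto
    then show "i \<in> Pred n t" unfolding Pred_def using k tw[of k] tw[of "Suc k"]
      by (intro CollectI conjI exI[of _ "w (Suc k)"]) auto
  qed
qed

end


lemma Theta_props:
  assumes n: "1 \<le> n" and t: "t permutes {1..n}"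
  shows "Psi n (inv t) permutes {1..n}"
    "FixBar n (Psi n (inv t)) = Suc_set n t"
    "DropBar n (Psi n (inv t)) = najSuc n t"
    "ExcBar n (Psi n (inv t)) = Pred n t"
proof -
  interpret tw n "inv t" t
    by unfold_locales (rule permutes_inv[OF t], rule t, rule permutes_inverses(1)[OF t],
      rule permutes_inverses(2)[OF t])
  show "Psi n (inv t) permutes {1..n}" using Psi_perm[OF n] .
  show "FixBar n (Psi n (inv t)) = Suc_set n t" using Fix_eq[OF n] Suc_eq by simp
  show "DropBar n (Psi n (inv t)) = najSuc n t" using Drop_eq[OF n] najSuc_eq by simp
  show "ExcBar n (Psi n (inv t)) = Pred n t" using Exc_eq[OF n] Pred_eq by simp
qed

lemma Theta_inj:
  assumes n: "1 \<le> n" and t1: "t1 permutes {1..n}" and t2: "t2 permutes {1..n}"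
    and e: "Psi n (inv t1) = Psi n (inv t2)"
  shows "t1 = t2"
proof -
  interpret W1: wp n "inv t1" by unfold_locales (rule permutes_inv[OF t1])
  interpret W2: wp n "inv t2" by unfold_locales (rule permutes_inv[OF t2])
  have gg: "W2.gg = W1.gg" unfolding W1.gg_def W2.gg_def e by (rule refl)
  have H2: "W1.gg (inv t2 k) = GG n (inv t2) k" if "1 \<le> k" "k \<le> n" for k
    using W2.gg_H[OF n that] gg by simp
  have "inv t1 = inv t2"
    by (rule word_inj[OF permutes_inv[OF t1] permutes_inv[OF t2] W1.gg_H[OF n] H2])
  then show ?thesis using permutes_inv_inv[OF t1] permutes_inv_inv[OF t2] by metis
qed

theorem mainTheorem1:
  fixes n :: nat
  assumes "n \<ge> 1"
  shows "\<exists>\<phi>. bij_betw \<phi> (perms n) (perms n) \<and>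
    (\<forall>\<sigma>\<in>perms n. FixBar n \<sigma> = Suc_set n (\<phi> \<sigma>) \<and>
                    DropBar n \<sigma> = najSuc n (\<phi> \<sigma>) \<and>
                    ExcBar n \<sigma> = Pred n (\<phi> \<sigma>))"
proof -
  define Th where "Th = (\<lambda>t. Psi n (inv t))"
  have fin: "finite (perms n)" unfolding perms_def by (rule finite_permutations) simp
  have img: "Th ` perms n \<subseteq> perms n"
    unfolding Th_def perms_def using Theta_props(1)[OF assms] by auto
  have inj: "inj_on Th (perms n)"
    unfolding Th_def perms_def by (rule inj_onI) (use Theta_inj[OF assms] in auto)
  have bij: "bij_betw Th (perms n) (perms n)"
    unfolding bij_betw_def using inj endo_inj_surj[OF fin img inj] by auto
  define \<phi> where "\<phi> = inv_into (perms n) Th"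
  have bphi: "bij_betw \<phi> (perms n) (perms n)" unfolding \<phi>_def by (rule bij_betw_inv_into[OF bij])
  show ?thesis
  proof (intro exI[of _ \<phi>] conjI ballI bphi)
    fix \<sigma> assume s: "\<sigma> \<in> perms n"
    have tp: "\<phi> \<sigma> \<in> perms n" using bij_betw_apply[OF bphi s] .
    have "Th (\<phi> \<sigma>) = \<sigma>" unfolding \<phi>_def
      using f_inv_into_f[of \<sigma> Th "perms n"] s bij unfolding bij_betw_def by auto
    then have eq: "\<sigma> = Psi n (inv (\<phi> \<sigma>))" unfolding Th_def by simp
    have t: "\<phi> \<sigma> permutes {1..n}" using tp unfolding perms_def by simp
    show "FixBar n \<sigma> = Suc_set n (\<phi> \<sigma>)" using Theta_props(2)[OF assms t] eq by simp
    show "DropBar n \<sigma> = najSuc n (\<phi> \<sigma>)" using Theta_props(3)[OF assms t] eq by simp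
    show "ExcBar n \<sigma> = Pred n (\<phi> \<sigma>)" using Theta_props(4)[OF assms t] eq by simp
  qed
qed

end
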